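(* With the sequence $(f^{(k)},g^{(k)})_{k\ge0}$, $d_k$ and $\Delta_k$ defined as in the context, for every $k\ge 0$: (A) if $k$ is even then $\Delta_k=0$, and if $k$ is odd then $\Delta_k=1$ and $d_k=1$; (B) $(f^{(k+1)},g^{(k+1)})=(f^{(k)},\,z\,g^{(k)})$ if $k$ is even, and $(f^{(k+1)},g^{(k+1)})=(x f^{(k)}+g^{(k)},\,z f^{(k)})$ if $k$ is odd; (C) $|f^{(k+1)}|=\lfloor (k+3)/2\rfloor$; (D) $f^{(k+1)}(0,1)=g^{(k+1)}(0,1)=1$.
   Context: $\mathbb{F}=\mathrm{GF}(2)$, $R=\mathbb{F}[x,z]$, $|\cdot|$ is total degree. Let $(r_0,r_1,\ldots)$ be the binary sequence with $r_i=1$ if $i=2^j-1$ for some $j\ge 0$ and $r_i=0$ otherwise, i.e. $(1,1,0,1,0,0,0,1,0^7,1,\ldots)$. For $n\ge1$ its inverse form is $R^{(1-n)}=\sum_{j=1-n}^{0}r_{-j}\,x^{j}z^{1-n-j}\in\mathbb{F}[x^{-1},z^{-1}]$, a homogeneous Laurent form of degree $1-n$. For a form $f\in R$ and such a form $G$, $\Delta(f;G)$ is the coefficient of $x^{|f|+|G|}z^0$ in the product $f\cdot G$ computed in $\mathbb{F}[x^{\pm1},z^{\pm1}]$ if $|f|+|G|\le 0$, and $0$ otherwise. Define forms recursively: $(f^{(0)},g^{(0)})=(x+z,z)$; for $k\ge0$ let $d_k=|g^{(k)}|-|f^{(k)}|$ and $\Delta_k=\Delta(f^{(k)};R^{(-1-k)})$,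 and set $(f^{(k+1)},g^{(k+1)})=(f^{(k)},zg^{(k)})$ if $\Delta_k=0$; $=(f^{(k)}+x^{-d_k}g^{(k)},\,zg^{(k)})$ if $\Delta_k=1$ and $d_k\le0$; $=(x^{d_k}f^{(k)}+g^{(k)},\,zf^{(k)})$ if $\Delta_k=1$ and $d_k>0$. *)

theory Defs
  imports Main
begin

text \<open>Laurent polynomials in two variables x, z over GF(2), represented by their
coefficient function: a form f is a map (i,j) \<mapsto> coefficient of
x^i z^j, with True standing for 1 and False for 0. All forms used have finite support;
elements of R = F[x,z] have support in the nonnegative quadrant.\<close>

type_synonym lform = "int \<times> int \<Rightarrow> bool"

definition ladd :: "lform \<Rightarrow> lform \<Rightarrow> lform" where
  "ladd f g = (\<lambda>m. f m \<noteq> g m)"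

definition lmul :: "lform \<Rightarrow> lform \<Rightarrow> lform" where
  "lmul f g = (\<lambda>(i, j). odd (card {(a, b). f a \<and> g b \<and> fst a + fst b = i \<and> snd a + snd b = j}))"

definition lmon :: "int \<Rightarrow> int \<Rightarrow> lform" where
  "lmon i j = (\<lambda>m. m = (i, j))"

definition tdeg :: "lform \<Rightarrow> int" where
  "tdeg f = Max {i + j | i j. f (i, j)}"

text \<open>Evaluation of a polynomial (nonnegative exponents) at a point (u,v) of GF(2)^2,
with 0^0 = 1.\<close>
definition leval :: "lform \<Rightarrow> bool \<Rightarrow> bool \<Rightarrow> bool" where
  "leval f u v = odd (card {(a, b). f (a, b) \<and> (u \<or> a = 0) \<and> (v \<or> b = 0)})"

definition rseq :: "nat \<Rightarrow> bool" where
  "rseq i = (\<exists>j::nat. i = 2 ^ j - 1)"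

text \<open>Inverse form R^(1-n) = sum_{j=1-n}^0 r_{-j} x^j z^(1-n-j).\<close>
definition Rinv :: "nat \<Rightarrow> lform" where
  "Rinv n = (\<lambda>(j, e). 1 - int n \<le> j \<and> j \<le> 0 \<and> e = 1 - int n - j \<and> rseq (nat (- j)))"

definition Delta :: "lform \<Rightarrow> lform \<Rightarrow> bool" where
  "Delta f G = (if tdeg f + tdeg G \<le> 0 then lmul f G (tdeg f + tdeg G, 0) else False)"

definition dk :: "lform \<times> lform \<Rightarrow> int" where
  "dk p = tdeg (snd p) - tdeg (fst p)"

text \<open>Delta_k = Delta(f^(k); R^(-1-k)), i.e. n = k+2.\<close>
definition Deltak :: "nat \<Rightarrow> lform \<times> lform \<Rightarrow> bool" where
  "Deltak k p = Delta (fst p) (Rinv (k + 2))"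

definition step :: "nat \<Rightarrow> lform \<times> lform \<Rightarrow> lform \<times> lform" where
  "step k p = (let f = fst p; g = snd p; d = dk p in
     if \<not> Deltak k p then (f, lmul (lmon 0 1) g)
     else if d \<le> 0 then (ladd f (lmul (lmon (- d) 0) g), lmul (lmon 0 1) g)
     else (ladd (lmul (lmon d 0) f) g, lmul (lmon 0 1) f))"

primrec fg :: "nat \<Rightarrow> lform \<times> lform" where
  "fg 0 = (ladd (lmon 1 0) (lmon 0 1), lmon 0 1)"
| "fg (Suc k) = step k (fg k)"

end

theory Submission imports Defs "HOL-Computational_Algebra.Formal_Power_Series" "HOL-Library.Z2"
begin
unbundle fps_syntax

lemma bit_add_self[simp]: "(x::bit) + x = 0" by (cases x) simp_all

lemma bitfps_add_self[simp]: "(a::bit fps) + a = 0"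
  by (rule fps_ext) (simp only: fps_add_nth bit_add_self fps_zero_nth)

lemma bitfps_two: "(2::bit fps) = 0"
  by (metis bitfps_add_self one_add_one)

lemma bit_of_nat: "(of_nat n :: bit) = (if odd n then 1 else 0)"
  by (induction n) auto

lemma sym_sum_bit:
  fixes h :: "nat \<Rightarrow> bit"
  assumes "\<And>i. i \<le> n \<Longrightarrow> h (n - i) = h i"
  shows "(\<Sum>i=0..n. h i) = (if even n then h (n div 2) else 0)"
proof -
  define A where "A = {i. i \<le> n \<and> 2*i < n}"
  define B where "B = {i. i \<le> n \<and> 2*i > n}"
  define C where "C = {i. i \<le> n \<and> 2*i = n}"
  have fin: "finite A" "finite B" "finite C" unfolding A_def B_def C_def by auto
  have split: "{0..n} = A \<union> B \<union> C" unfolding A_def B_def C_def by auto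
  have "(\<Sum>i=0..n. h i) = sum h A + sum h B + sum h C"
  proof -
    have d1: "(A \<union> B) \<inter> C = {}" "A \<inter> B = {}" unfolding A_def B_def C_def by auto
    have "sum h (A \<union> B \<union> C) = sum h (A \<union> B) + sum h C"
      using fin d1 by (intro sum.union_disjoint) auto
    also have "sum h (A \<union> B) = sum h A + sum h B"
      using fin d1 by (intro sum.union_disjoint) auto
    finally show ?thesis unfolding split .
  qed
  moreover have "sum h B = sum h A"
  proof -
    have "B = (\<lambda>i. n - i) ` A" unfolding A_def B_def
    proof (intro equalityI subsetI)
      fix x assume "x \<in> {i. i \<le> n \<and> n < 2 * i}"
      then show "x \<in> (\<lambda>i. n - i) ` {i. i \<le> n \<and> 2 * i < n}"
        by (intro image_eqI[where x="n - x"]) auto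
    qed auto
    moreover have "inj_on (\<lambda>i. n - i) A" unfolding A_def by (auto simp: inj_on_def)
    ultimately have "sum h B = sum (h \<circ> (\<lambda>i. n - i)) A" by (simp add: sum.reindex)
    also have "\<dots> = sum h A" using assms unfolding A_def by (intro sum.cong) auto
    finally show ?thesis .
  qed
  moreover have "C = (if even n then {n div 2} else {})" unfolding C_def by auto
  ultimately show ?thesis by auto
qed

lemma frob: "((f::bit fps) * f) $ n = (if even n then f $ (n div 2) else 0)"
proof -
  have "(f*f)$n = (\<Sum>i=0..n. f$i * f$(n-i))" by (rule fps_mult_nth)
  also have "\<dots> = (if even n then f$(n div 2) * f$(n - n div 2) else 0)"
    by (rule sym_sum_bit) (simp add: mult.commute)
  also have "\<dots> = (if even n then f $ (n div 2) else 0)"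
    by (cases "f $ (n div 2)") (auto elim!: evenE)
  finally show ?thesis .
qed

definition Tser :: "bit fps" where
  "Tser = Abs_fps (\<lambda>n. if (\<exists>j::nat. n = 2^j) then 1 else 0)"

lemma Tser_nth: "Tser $ n = (if (\<exists>j::nat. n = 2^j) then 1 else 0)"
  by (simp add: Tser_def)

lemma Tser_0[simp]: "Tser $ 0 = 0" by (simp add: Tser_nth)

lemma pow2_odd: "odd (n::nat) \<Longrightarrow> (\<exists>j::nat. n = 2^j) \<longleftrightarrow> n = 1"
  by (metis even_power odd_pos power_0 zero_less_iff_neq_zero even_numeral)

lemma pow2_even: "(k::nat) > 0 \<Longrightarrow> (\<exists>j::nat. 2*k = 2^j) \<longleftrightarrow> (\<exists>j::nat. k = 2^j)"
proof
  assume "\<exists>j. 2*k = 2^j" then obtain j where j: "2*k = (2::nat)^j" by blast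
  assume "k > 0"
  have "j \<noteq> 0" using j \<open>k>0\<close> by (cases j) auto
  then obtain i where "j = Suc i" by (cases j) auto
  then show "\<exists>j. k = 2^j" using j by auto
next
  assume "\<exists>j::nat. k = 2^j" then obtain j where "k = 2^j" by blast
  then show "\<exists>j::nat. 2*k = 2^j" by (intro exI[of _ "Suc j"]) simp
qed

lemma Tser_quad: "Tser * Tser + Tser = fps_X"
proof (rule fps_ext)
  fix n
  show "(Tser * Tser + Tser) $ n = fps_X $ n"
  proof (cases "even n")
    case True
    then obtain k where k: "n = 2*k" by blast
    show ?thesis
    proof (cases "k = 0")
      case True then show ?thesis using k by (simp add: frob fps_X_def)
    next
      case False
      then show ?thesis using k pow2_even[of k] by (simp add: frob fps_X_def Tser_nth)
    qed
  next
    case False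
    then show ?thesis using pow2_odd[of n] by (simp add: frob fps_X_def Tser_nth)
  qed
qed

fun Pp :: "nat \<Rightarrow> bit fps" where
  "Pp 0 = 1" | "Pp (Suc 0) = 1 + fps_X" | "Pp (Suc (Suc n)) = Pp (Suc n) + fps_X^2 * Pp n"
fun Qq :: "nat \<Rightarrow> bit fps" where
  "Qq 0 = 0" | "Qq (Suc 0) = fps_X" | "Qq (Suc (Suc n)) = Qq (Suc n) + fps_X^2 * Qq n"

lemma bitfps_2x: "2 * (a::bit fps) = 0" by (simp add: bitfps_two)

lemma bitfps_four: "(4::bit fps) = 0"
proof - have "(4::bit fps) = 2 * 2" by simp also have "\<dots> = 0" by (rule bitfps_2x) finally show ?thesis . qed

lemma Dlem: "Pp n * Qq (Suc n) + Pp (Suc n) * Qq n = fps_X^(2*n+1)"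
proof (induction n)
  case 0 then show ?case by simp
next
  case (Suc n)
  have "Pp (Suc n) * Qq (Suc (Suc n)) + Pp (Suc (Suc n)) * Qq (Suc n)
      = 2 * (Pp (Suc n) * Qq (Suc n)) + fps_X^2 * (Pp n * Qq (Suc n) + Pp (Suc n) * Qq n)"
    by (simp add: algebra_simps)
  also have "\<dots> = fps_X^(2 * Suc n + 1)" using Suc by (simp add: bitfps_2x power_add[symmetric])
  finally show ?case .
qed

lemma aba: "(a::bit fps) + b + a = b"
  by (metis add.commute add.left_commute add_0_right bitfps_add_self)

lemma Nlem: "fps_X * Pp n ^ 2 + Pp n * Qq n + Qq n ^ 2 = fps_X^(2*n+1)"
proof (induction n rule: Pp.induct)
  case 1 then show ?case by simp
next
  case 2 then show ?case by (simp add: algebra_simps power2_eq_square bitfps_two bitfps_four)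
next
  case (3 n)
  let ?a = "Pp (Suc n)" and ?b = "Pp n" and ?c = "Qq (Suc n)" and ?d = "Qq n"
  have "fps_X * Pp (Suc (Suc n)) ^ 2 + Pp (Suc (Suc n)) * Qq (Suc (Suc n)) + Qq (Suc (Suc n)) ^ 2
     = (fps_X * ?a^2 + ?a * ?c + ?c^2) + fps_X^4 * (fps_X * ?b^2 + ?b * ?d + ?d^2)
       + fps_X^2 * (?b * ?c + ?a * ?d) + 2 * (fps_X^3 * ?a * ?b + fps_X^2 * ?c * ?d)"
    by (simp add: algebra_simps power2_eq_square power_numeral_reduce)
  also have "\<dots> = fps_X^(2 * Suc n + 1) + fps_X^4 * fps_X^(2*n+1) + fps_X^2 * fps_X^(2*n+1)"
    using 3 Dlem[of n] by (simp add: bitfps_2x)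
  also have "\<dots> = fps_X^(2 * n + 3) + fps_X^(2*n+5) + fps_X^(2*n+3)"
  proof -
    have e0: "2 * Suc n + 1 = 2*n+3" by simp
    have e1: "fps_X^4 * fps_X^(2*n+1) = (fps_X::bit fps)^(2*n+5)"
    proof - have "(4::nat) + (2*n+1) = 2*n+5" by simp then show ?thesis by (metis power_add) qed
    have e2: "fps_X^2 * fps_X^(2*n+1) = (fps_X::bit fps)^(2*n+3)"
    proof - have "(2::nat) + (2*n+1) = 2*n+3" by simp then show ?thesis by (metis power_add) qed
    show ?thesis by (simp only: e0 e1 e2)
  qed
  also have "\<dots> = fps_X^(2*n+5)" by (rule aba)
  also have "2*n+5 = 2 * Suc (Suc n) + 1" by simp
  finally show ?case .
qed

lemma Pp_0[simp]: "Pp n $ 0 = 1" by (induction n rule: Pp.induct) simp_all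
lemma Qq_0[simp]: "Qq n $ 0 = 0" by (induction n rule: Qq.induct) simp_all
lemma Pp_deg: "n < j \<Longrightarrow> Pp n $ j = 0"
  by (induction n arbitrary: j rule: Pp.induct) (auto simp: fps_X_power_mult_nth fps_X_nth)
lemma Qq_deg: "n < j \<Longrightarrow> Qq n $ j = 0"
  by (induction n arbitrary: j rule: Qq.induct) (auto simp: fps_X_power_mult_nth fps_X_nth)
lemma Pp_top: "Pp n $ n = 1"
  by (induction n rule: Pp.induct) (auto simp: fps_X_power_mult_nth fps_X_nth Pp_deg)

lemma bit_cancel: "(a::bit) = (a + b) + b" by (cases a; cases b) simp_all

lemma Ecoef:
  assumes "j \<le> 2*n+1"
  shows "(Pp n * Tser) $ j = (if j = 2*n+1 then 1 else 0) + Qq n $ j"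
proof -
  define E where "E = Pp n * Tser + Qq n"
  define U where "U = E + Pp n"
  have "E * U = Pp n^2 * (Tser*Tser+Tser) + (Qq n*Pp n + Qq n^2) + 2*(Pp n*Tser*Qq n)"
    unfolding E_def U_def by (simp add: algebra_simps power2_eq_square)
  also have "\<dots> = Pp n^2 * fps_X + (Qq n*Pp n + Qq n^2) + 0"
    by (simp only: Tser_quad bitfps_2x)
  also have "\<dots> = fps_X^(2*n+1)"
    using Nlem[of n] by (simp add: algebra_simps)
  finally have EU: "E * U = fps_X^(2*n+1)" .
  have U0: "U $ 0 = 1" unfolding U_def E_def by simp
  have "E = E * (U * inverse U)" using inverse_mult_eq_1'[of U] U0 by simp
  also have "\<dots> = fps_X^(2*n+1) * inverse U" by (simp add: EU mult.assoc[symmetric])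
  finally have EE: "E = fps_X^(2*n+1) * inverse U" .
  have Ej: "E $ j = (if j = 2*n+1 then 1 else 0)"
  proof -
    have Ej: "E $ j = (if j < 2*n+1 then 0 else inverse U $ (j - (2*n+1)))"
      unfolding EE by (rule fps_X_power_mult_nth)
    then show ?thesis using U0 assms by auto
  qed
  moreover have "(Pp n * Tser) $ j = E $ j + Qq n $ j"
  proof -
    have "E$j = (Pp n*Tser)$j + Qq n$j" unfolding E_def by simp
    then show ?thesis by (metis bit_cancel)
  qed
  ultimately show ?thesis by (simp only: Ej)
qed

lemma Ecoef1: "(Pp n * Tser) $ (2*n+1) = 1"
  using Ecoef[where n=n and j="2*n+1"] Qq_deg[of n "2*n+1"] by simp
lemma Ecoef0: "n \<ge> 1 \<Longrightarrow> (Pp n * Tser) $ (2*n) = 0"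
  using Ecoef[where n=n and j="2*n"] Qq_deg[of n "2*n"] by simp

definition hom :: "nat \<Rightarrow> bit fps \<Rightarrow> lform" where
  "hom d p = (\<lambda>(i,j). 0 \<le> i \<and> 0 \<le> j \<and> i + j = int d \<and> p $ nat j = 1)"

definition bnd :: "nat \<Rightarrow> bit fps \<Rightarrow> bool" where
  "bnd d p = (\<forall>j>d. p $ j = 0)"

lemma lmul_mon: "lmul (lmon u v) f = (\<lambda>(i,j). f (i-u, j-v))"
proof (rule ext, clarify)
  fix i j
  have "{(a, b). lmon u v a \<and> f b \<and> fst a + fst b = i \<and> snd a + snd b = j}
     = (if f (i-u, j-v) then {((u,v),(i-u,j-v))} else {})"
    by (auto simp: lmon_def)
  then show "lmul (lmon u v) f (i, j) = f (i - u, j - v)"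
    unfolding lmul_def by simp
qed

lemma lmul_z: "lmul (lmon 0 1) (hom d p) = hom (d+1) (fps_X * p)"
proof (rule ext, clarify)
  fix i j :: int
  show "lmul (lmon 0 1) (hom d p) (i, j) = hom (d+1) (fps_X * p) (i, j)"
    unfolding lmul_mon hom_def
    by (cases "j \<ge> 1") (auto simp: nat_diff_distrib')
qed

lemma lmul_x: "bnd d p \<Longrightarrow> lmul (lmon 1 0) (hom d p) = hom (d+1) p"
proof (rule ext, clarify)
  fix i j :: int
  assume b: "bnd d p"
  show "lmul (lmon 1 0) (hom d p) (i, j) = hom (d+1) p (i, j)"
  proof (cases "i \<ge> 1")
    case True then show ?thesis unfolding lmul_mon hom_def by auto
  next
    case False
    have "\<not> (i = 0 \<and> j = int d + 1 \<and> p $ nat j = 1)"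
    proof
      assume h: "i = 0 \<and> j = int d + 1 \<and> p $ nat j = 1"
      then have "nat j = d + 1" by simp
      then show False using h b unfolding bnd_def by auto
    qed
    then show ?thesis using False unfolding lmul_mon hom_def
      by (cases "i = 0") (auto simp: add.commute)
  qed
qed

lemma bit_eq1_add: "((a::bit) + b = 1) = ((a = 1) \<noteq> (b = 1))"
  by (cases a; cases b) simp_all

lemma ladd_hom: "ladd (hom d a) (hom d b) = hom d (a + b)"
  by (rule ext) (auto simp: ladd_def hom_def bit_eq1_add)

lemma tdeg_hom: assumes "p $ j = 1" "j \<le> d" shows "tdeg (hom d p) = int d"
proof -
  have "{i + j | i j. hom d p (i, j)} = {int d}"
  proof
    show "{i + j | i j. hom d p (i, j)} \<subseteq> {int d}" by (auto simp: hom_def)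
    have "hom d p (int d - int j, int j)" using assms by (simp add: hom_def)
    then show "{int d} \<subseteq> {i + j | i j. hom d p (i, j)}" by force
  qed
  then show ?thesis unfolding tdeg_def by simp
qed

lemma leval_hom: assumes "bnd d p" shows "leval (hom d p) False True = (p $ d = 1)"
proof -
  have "{(a, b). hom d p (a, b) \<and> (False \<or> a = 0) \<and> (True \<or> b = 0)}
      = (if p $ d = 1 then {(0, int d)} else {})"
    by (auto simp: hom_def)
  then show ?thesis unfolding leval_def by simp
qed

lemma tdeg_Rinv: assumes "N \<ge> 1" shows "tdeg (Rinv N) = 1 - int N"
proof -
  have "{i + j | i j. Rinv N (i, j)} = {1 - int N}"
  proof
    show "{i + j | i j. Rinv N (i, j)} \<subseteq> {1 - int N}" by (auto simp: Rinv_def)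
    have "rseq 0" unfolding rseq_def by (intro exI[of _ 0]) simp
    then have "Rinv N (0, 1 - int N)" using assms by (simp add: Rinv_def)
    then show "{1 - int N} \<subseteq> {i + j | i j. Rinv N (i, j)}" by force
  qed
  then show ?thesis unfolding tdeg_def by simp
qed

lemma rseq_T: "rseq m = (Tser $ Suc m = 1)"
proof -
  have "(\<exists>j::nat. m = 2^j - 1) = (\<exists>j::nat. Suc m = 2^j)"
    by (metis Suc_pred' add_diff_cancel_left' plus_1_eq_Suc zero_less_power pos2)
  then show ?thesis unfolding rseq_def Tser_nth by simp
qed

lemma bit_mult_if: "(a::bit) * b = (if a = 1 \<and> b = 1 then 1 else 0)"
  by (cases a; cases b) simp_all

lemma Delta_hom:
  assumes b: "bnd d p" and w: "p $ jw = 1" "jw \<le> d" and dN: "d < N"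
  shows "Delta (hom d p) (Rinv N) = ((p * Tser) $ N = 1)"
proof -
  have N1: "N \<ge> 1" using dN by simp
  have td: "tdeg (hom d p) + tdeg (Rinv N) = int d + 1 - int N"
    using tdeg_hom[OF w] tdeg_Rinv[OF N1] by simp
  have le: "int d + 1 - int N \<le> 0" using dN by simp
  define J where "J = {j \<in> {0..N}. p $ j = 1 \<and> Tser $ (N - j) = 1}"
  define S where "S = {(a, b). hom d p a \<and> Rinv N b \<and> fst a + fst b = int d + 1 - int N \<and> snd a + snd b = 0}"
  define \<phi> where "\<phi> = (\<lambda>j::nat. ((int d - int j, int j), (1 - int N + int j, - int j)))"
  have SJ: "S = \<phi> ` J"
  proof (intro equalityI subsetI)
    fix x assume "x \<in> S"
    then obtain i jj j' e where x: "x = ((i, jj), (j', e))" and h: "hom d p (i, jj)" "Rinv N (j', e)"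
      "i + j' = int d + 1 - int N" "jj + e = 0" unfolding S_def by auto
    define j where "j = nat jj"
    have jj: "jj = int j" "0 \<le> jj" using h(1) unfolding j_def hom_def by auto
    have pj: "p $ j = 1" using h(1) unfolding hom_def j_def by auto
    have R: "1 - int N \<le> j'" "j' \<le> 0" "e = 1 - int N - j'" "rseq (nat (- j'))"
      using h(2) unfolding Rinv_def by auto
    have j'e: "j' = 1 - int N + int j" using R(3) h(4) jj by simp
    have jN: "j < N" using R(2) j'e by simp
    have "nat (- j') = N - 1 - j" using j'e jN by simp
    then have "Tser $ Suc (N - 1 - j) = 1" using R(4) rseq_T by simp
    moreover have "Suc (N - 1 - j) = N - j" using jN by simp
    ultimately have "Tser $ (N - j) = 1" by simp
    then have "j \<in> J" using pj jN unfolding J_def by simp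
    moreover have "x = \<phi> j" using x h jj j'e unfolding \<phi>_def hom_def by auto
    ultimately show "x \<in> \<phi> ` J" by blast
  next
    fix x assume "x \<in> \<phi> ` J"
    then obtain j where x: "x = \<phi> j" and j: "j \<le> N" "p $ j = 1" "Tser $ (N - j) = 1"
      unfolding J_def by auto
    have jd: "j \<le> d" using j(2) b unfolding bnd_def by (metis not_le one_neq_zero)
    have "rseq (N - 1 - j)" using j(3) jd dN rseq_T[of "N - 1 - j"]
      by (metis Suc_diff_Suc Suc_pred' diff_Suc_eq_diff_pred le_less_trans zero_less_diff)
    moreover have "nat (- (1 - int N + int j)) = N - 1 - j" using jd dN by simp
    ultimately have "Rinv N (1 - int N + int j, - int j)" using jd dN unfolding Rinv_def by simp
    moreover have "hom d p (int d - int j, int j)" using jd j unfolding hom_def by simp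
    ultimately show "x \<in> S" unfolding S_def x \<phi>_def by simp
  qed
  have inj: "inj_on \<phi> J" unfolding \<phi>_def inj_on_def by auto
  have finJ: "finite J" unfolding J_def by simp
  have cS: "card S = card J" using SJ inj by (simp add: card_image)
  have "(p * Tser) $ N = (\<Sum>j=0..N. p $ j * Tser $ (N - j))" by (rule fps_mult_nth)
  also have "\<dots> = (\<Sum>j=0..N. if p $ j = 1 \<and> Tser $ (N - j) = 1 then 1 else 0)"
    by (intro sum.cong refl) (simp add: bit_mult_if)
  also have "\<dots> = (\<Sum>j\<in>J. 1)" unfolding J_def
    by (rule sum.inter_filter[symmetric]) simp
  also have "\<dots> = of_nat (card J)" by simp
  finally have "(p * Tser) $ N = (if odd (card S) then 1 else 0)" using cS bit_of_nat by simp
  moreover have "lmul (hom d p) (Rinv N) (int d + 1 - int N, 0) = odd (card S)"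
    unfolding lmul_def S_def by simp
  ultimately show ?thesis unfolding Delta_def td using le by simp
qed

lemma bnd_P: "bnd (Suc n) (Pp (Suc n))" unfolding bnd_def using Pp_deg by auto
lemma bnd_XP: "bnd (Suc n) (fps_X * Pp n)" unfolding bnd_def using Pp_deg by auto
lemma bnd_X2P: "bnd (Suc (Suc n)) (fps_X^2 * Pp n)" unfolding bnd_def
  using Pp_deg by (auto simp: fps_X_power_mult_nth)

definition EV :: "nat \<Rightarrow> lform \<times> lform" where
  "EV n = (hom (Suc n) (Pp (Suc n)), hom (Suc n) (fps_X * Pp n))"
definition OD :: "nat \<Rightarrow> lform \<times> lform" where
  "OD n = (hom (Suc n) (Pp (Suc n)), hom (Suc (Suc n)) (fps_X^2 * Pp n))"

lemma Delta_EV: "\<not> Deltak (2*n) (EV n)"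
proof -
  have "Delta (hom (Suc n) (Pp (Suc n))) (Rinv (2*n+2)) = ((Pp (Suc n) * Tser) $ (2*n+2) = 1)"
    by (rule Delta_hom[OF bnd_P, where jw=0]) simp_all
  then have "Deltak (2*n) (EV n) = ((Pp (Suc n) * Tser) $ (2*n+2) = 1)"
    unfolding Deltak_def EV_def by simp
  also have "(Pp (Suc n) * Tser) $ (2*n+2) = 0" using Ecoef0[of "Suc n"] by simp
  finally show ?thesis by simp
qed

lemma Delta_OD: "Deltak (2*n+1) (OD n)"
proof -
  have "Delta (hom (Suc n) (Pp (Suc n))) (Rinv (2*n+3)) = ((Pp (Suc n) * Tser) $ (2*n+3) = 1)"
    by (rule Delta_hom[OF bnd_P, where jw=0]) simp_all
  then have "Deltak (2*n+1) (OD n) = ((Pp (Suc n) * Tser) $ (2*n+3) = 1)"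
  proof -
    have "2*n+1+2 = 2*n+3" by simp
    then show ?thesis using \<open>Delta _ _ = _\<close> unfolding Deltak_def OD_def by (simp only: fst_conv)
  qed
  also have "(Pp (Suc n) * Tser) $ (2*n+3) = 1"
  proof - have "2*Suc n + 1 = 2*n+3" by simp
    then show ?thesis using Ecoef1[of "Suc n"] by metis qed
  finally show ?thesis by simp
qed

lemma dk_OD: "dk (OD n) = 1"
proof -
  have "tdeg (hom (Suc (Suc n)) (fps_X^2 * Pp n)) = int (Suc (Suc n))"
    by (rule tdeg_hom[where j="Suc (Suc n)"]) (simp_all add: fps_X_power_mult_nth Pp_top)
  moreover have "tdeg (hom (Suc n) (Pp (Suc n))) = int (Suc n)"
    by (rule tdeg_hom[where j=0]) simp_all
  ultimately show ?thesis unfolding dk_def OD_def by simp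
qed

lemma XXp: "fps_X * (fps_X * p) = fps_X^2 * (p::bit fps)"
  by (simp add: power2_eq_square mult.assoc)

lemma step_EV: "step (2*n) (EV n) = OD n"
  using Delta_EV[of n] unfolding step_def Let_def
  by (simp add: EV_def OD_def lmul_z XXp)

lemma step_OD: "step (2*n+1) (OD n) = EV (Suc n)"
proof -
  have "step (2*n+1) (OD n) = (ladd (lmul (lmon 1 0) (fst (OD n))) (snd (OD n)), lmul (lmon 0 1) (fst (OD n)))"
    using Delta_OD[of n] dk_OD[of n] unfolding step_def Let_def by simp
  also have "\<dots> = EV (Suc n)"
    unfolding OD_def EV_def by (simp add: lmul_x[OF bnd_P] lmul_z ladd_hom)
  finally show ?thesis .
qed

lemma fg0: "fg 0 = EV 0"
proof -
  have "ladd (lmon 1 0) (lmon 0 1) = hom 1 (Pp 1)"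
  proof (rule ext, clarify)
    fix i j :: int
    show "ladd (lmon 1 0) (lmon 0 1) (i, j) = hom 1 (Pp 1) (i, j)"
      unfolding ladd_def lmon_def hom_def
      by (cases "j = 0"; cases "j = 1") (auto simp: fps_X_nth nat_eq_iff)
  qed
  moreover have "lmon 0 1 = hom 1 (fps_X * Pp 0)"
  proof (rule ext, clarify)
    fix i j :: int
    show "lmon 0 1 (i, j) = hom 1 (fps_X * Pp 0) (i, j)"
      unfolding lmon_def hom_def
      by (cases "j = 1") (auto simp: fps_X_nth nat_eq_iff)
  qed
  ultimately show ?thesis unfolding EV_def by simp
qed

lemma fg_form: "fg (2*n) = EV n \<and> fg (2*n+1) = OD n"
proof (induction n)
  case 0 then show ?case using fg0 step_EV[of 0] by simp
next
  case (Suc n)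
  have a: "2 * Suc n = Suc (2*n+1)" by simp
  have o: "fg (2*n+1) = OD n" using Suc.IH by (rule conjunct2)
  have "fg (2 * Suc n) = fg (Suc (2*n+1))" by (simp only: a)
  also have "\<dots> = step (2*n+1) (fg (2*n+1))" by (rule fg.simps(2))
  also have "\<dots> = EV (Suc n)" by (simp only: o step_OD)
  finally have e: "fg (2 * Suc n) = EV (Suc n)" .
  have "fg (Suc (2 * Suc n)) = step (2 * Suc n) (fg (2 * Suc n))" by (rule fg.simps(2))
  then have "fg (2 * Suc n + 1) = OD (Suc n)" by (simp only: e step_EV Suc_eq_plus1[symmetric])
  then show ?case using e by simp
qed

theorem theorem4:
  fixes k :: nat
  shows "(even k \<longrightarrow> \<not> Deltak k (fg k)) \<and> (odd k \<longrightarrow> Deltak k (fg k) \<and> dk (fg k) = 1)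
    \<and> (even k \<longrightarrow> fg (Suc k) = (fst (fg k), lmul (lmon 0 1) (snd (fg k))))
    \<and> (odd k \<longrightarrow> fg (Suc k) = (ladd (lmul (lmon 1 0) (fst (fg k))) (snd (fg k)), lmul (lmon 0 1) (fst (fg k))))
    \<and> tdeg (fst (fg (Suc k))) = int ((k + 3) div 2)
    \<and> leval (fst (fg (Suc k))) False True \<and> leval (snd (fg (Suc k))) False True"
proof (cases "even k")
  case True
  then obtain n where k: "k = 2*n" by blast
  have g: "fg (2*n) = EV n" "fg (2*n+1) = OD n" using fg_form[of n] by (rule conjunct1, rule conjunct2)
  have f1: "fg k = EV n" "fg (Suc k) = OD n" using g by (simp_all only: k Suc_eq_plus1)
  have D: "\<not> Deltak k (fg k)" using Delta_EV[of n] f1 k by simp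
  have B: "fg (Suc k) = (fst (fg k), lmul (lmon 0 1) (snd (fg k)))"
    using D unfolding fg.simps step_def Let_def by simp
  have C: "tdeg (fst (fg (Suc k))) = int ((k + 3) div 2)"
  proof -
    have "tdeg (hom (Suc n) (Pp (Suc n))) = int (Suc n)" by (rule tdeg_hom[where j=0]) simp_all
    moreover have "(k+3) div 2 = Suc n" using k by simp
    ultimately show ?thesis using f1 by (simp add: OD_def)
  qed
  have E1: "leval (fst (fg (Suc k))) False True"
    using f1 leval_hom[OF bnd_P] Pp_top by (simp add: OD_def)
  have E2: "leval (snd (fg (Suc k))) False True"
    using f1 leval_hom[OF bnd_X2P] Pp_top by (simp add: OD_def fps_X_power_mult_nth)
  show ?thesis using True D B C E1 E2 by simp
next
  case False
  then obtain n where k: "k = 2*n+1" using oddE by blast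
  have g: "fg (2*n+1) = OD n" "fg (2*Suc n) = EV (Suc n)" using conjunct2[OF fg_form[of n]] conjunct1[OF fg_form[of "Suc n"]] by blast+
  have a: "Suc k = 2 * Suc n" using k by simp
  have f1: "fg k = OD n" "fg (Suc k) = EV (Suc n)" using g by (simp only: k, simp only: a)
  have D: "Deltak k (fg k)" "dk (fg k) = 1" using Delta_OD[of n] dk_OD[of n] f1 k by simp_all
  have B: "fg (Suc k) = (ladd (lmul (lmon 1 0) (fst (fg k))) (snd (fg k)), lmul (lmon 0 1) (fst (fg k)))"
    using D unfolding fg.simps step_def Let_def by simp
  have C: "tdeg (fst (fg (Suc k))) = int ((k + 3) div 2)"
  proof -
    have "tdeg (hom (Suc (Suc n)) (Pp (Suc (Suc n)))) = int (Suc (Suc n))" by (rule tdeg_hom[where j=0]) simp_all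
    moreover have "(k+3) div 2 = Suc (Suc n)" using k by simp
    ultimately show ?thesis using f1 by (simp add: EV_def)
  qed
  have ff: "fst (fg (Suc k)) = hom (Suc (Suc n)) (Pp (Suc (Suc n)))"
    "snd (fg (Suc k)) = hom (Suc (Suc n)) (fps_X * Pp (Suc n))"
    using f1(2) by (simp_all only: EV_def fst_conv snd_conv)
  have E1: "leval (fst (fg (Suc k))) False True"
    unfolding ff(1) leval_hom[OF bnd_P] by (rule Pp_top)
  have E2: "leval (snd (fg (Suc k))) False True"
    unfolding ff(2) leval_hom[OF bnd_XP] by (simp add: Pp_top)
  show ?thesis using False D B C E1 E2 by simp
qed

end
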